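(* Let $G$ be an $H(4,3)$-free graph and $u^*\in V(G)$. Put $N=N(u^* )$, $W=V(G)\setminus N[u^*]$, and $A^{+}=\{v\in N: v \text{ has at least one neighbor in } N\}$. Assume that the induced subgraph $G[A^{+}]$ is isomorphic to $K_4$. Let \[ U:=\{w\in W: w \text{ has exactly one neighbor in } A^{+}\}. \] Then $U$ is an independent set in $G$ (equivalently, in $G[W]$).
   Context: $H(4,3)$ is the graph obtained from a $4$-cycle and a triangle by identifying one vertex of the $4$-cycle with one vertex of the triangle; $H(4,3)$-free means containing no subgraph (not necessarily induced) isomorphic to $H(4,3)$. $N(u^* )$ is the open neighborhood of $u^*$ and $N[u^*]=N(u^* )\cup\{u^*\}$. *)

theory Defs
  imports Main
begin

definition simple_graph :: "'a set \<Rightarrow> ('a \<Rightarrow> 'a \<Rightarrow> bool) \<Rightarrow> bool" where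
  "simple_graph V E \<longleftrightarrow> finite V \<and> (\<forall>x y. E x y \<longrightarrow> E y x) \<and> (\<forall>x. \<not> E x x)
     \<and> (\<forall>x y. E x y \<longrightarrow> x \<in> V \<and> y \<in> V)"

definition nbhd :: "'a set \<Rightarrow> ('a \<Rightarrow> 'a \<Rightarrow> bool) \<Rightarrow> 'a \<Rightarrow> 'a set" where
  "nbhd V E u = {v \<in> V. E u v}"

definition closed_nbhd :: "'a set \<Rightarrow> ('a \<Rightarrow> 'a \<Rightarrow> bool) \<Rightarrow> 'a \<Rightarrow> 'a set" where
  "closed_nbhd V E u = insert u (nbhd V E u)"

text \<open>G contains a (not necessarily induced) subgraph isomorphic to H(4,3):
a 4-cycle a-b-c-d-a and a triangle a-e-f sharing exactly the vertex a
(six distinct vertices).\<close>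
definition contains_H43 :: "'a set \<Rightarrow> ('a \<Rightarrow> 'a \<Rightarrow> bool) \<Rightarrow> bool" where
  "contains_H43 V E \<longleftrightarrow> (\<exists>a b c d e f.
      {a,b,c,d,e,f} \<subseteq> V \<and> distinct [a,b,c,d,e,f] \<and>
      E a b \<and> E b c \<and> E c d \<and> E d a \<and> E a e \<and> E e f \<and> E f a)"

definition H43_free :: "'a set \<Rightarrow> ('a \<Rightarrow> 'a \<Rightarrow> bool) \<Rightarrow> bool" where
  "H43_free V E \<longleftrightarrow> \<not> contains_H43 V E"

definition induced_K4 :: "('a \<Rightarrow> 'a \<Rightarrow> bool) \<Rightarrow> 'a set \<Rightarrow> bool" where
  "induced_K4 E S \<longleftrightarrow> card S = 4 \<and> (\<forall>x\<in>S. \<forall>y\<in>S. x \<noteq> y \<longrightarrow> E x y)"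

definition independent_set :: "('a \<Rightarrow> 'a \<Rightarrow> bool) \<Rightarrow> 'a set \<Rightarrow> bool" where
  "independent_set E S \<longleftrightarrow> (\<forall>x\<in>S. \<forall>y\<in>S. \<not> E x y)"

end

theory Submission
  imports Defs
begin

lemma two_others:
  assumes "card S = 4" "a \<in> S" "b \<in> S"
  obtains c d where "c \<in> S" "d \<in> S" "c \<noteq> d" "c \<noteq> a" "c \<noteq> b" "d \<noteq> a" "d \<noteq> b"
proof -
  have fin: "finite S" using assms(1) card.infinite by fastforce
  have "card S - card {a,b} \<le> card (S - {a,b})" by (rule diff_card_le_card_Diff) simp
  moreover have "card {a,b} \<le> 2" by (simp add: card_insert_le_m1)
  ultimately have c2: "card (S - {a,b}) \<ge> 2" using assms(1) by linarith
  then have "S - {a,b} \<noteq> {}" by (metis card.empty not_numeral_le_zero)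
  then obtain c where c: "c \<in> S - {a,b}" by blast
  have "card (S - {a,b} - {c}) \<ge> 1" using c2 c fin by (simp add: card_Diff_singleton)
  then have "S - {a,b} - {c} \<noteq> {}" by (metis card.empty not_one_le_zero)
  then obtain d where d: "d \<in> S - {a,b} - {c}" by blast
  show ?thesis using that[of c d] c d by blast
qed

theorem lemma4p2:
  fixes V :: "'a set" and E :: "'a \<Rightarrow> 'a \<Rightarrow> bool" and u :: 'a
  assumes "simple_graph V E"
    and "H43_free V E"
    and "u \<in> V"
    and "induced_K4 E {v \<in> nbhd V E u. \<exists>x \<in> nbhd V E u. E v x}"
  shows "independent_set E
           {w \<in> V - closed_nbhd V E u.
              card {a \<in> {v \<in> nbhd V E u. \<exists>x \<in> nbhd V E u. E v x}. E w a} = 1}"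
proof -
  define S where "S = {v \<in> nbhd V E u. \<exists>x \<in> nbhd V E u. E v x}"
  have sg: "finite V" "\<And>x y. E x y \<Longrightarrow> E y x" "\<And>x. \<not> E x x" "\<And>x y. E x y \<Longrightarrow> x \<in> V \<and> y \<in> V"
    using assms(1) unfolding simple_graph_def by blast+
  have K: "card S = 4" "\<And>x y. x \<in> S \<Longrightarrow> y \<in> S \<Longrightarrow> x \<noteq> y \<Longrightarrow> E x y"
    using assms(4) unfolding induced_K4_def S_def by blast+
  have Su: "\<And>x. x \<in> S \<Longrightarrow> E u x \<and> x \<in> V" unfolding S_def nbhd_def by blast
  have nH: "\<not> (\<exists>a b c d e f. {a,b,c,d,e,f} \<subseteq> V \<and> distinct [a,b,c,d,e,f] \<and>
      E a b \<and> E b c \<and> E c d \<and> E d a \<and> E a e \<and> E e f \<and> E f a)"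
    using assms(2) unfolding H43_free_def contains_H43_def by blast
  have nH': "\<And>a b c d e f. {a,b,c,d,e,f} \<subseteq> V \<and> distinct [a,b,c,d,e,f] \<and>
      E a b \<and> E b c \<and> E c d \<and> E d a \<and> E a e \<and> E e f \<and> E f a \<Longrightarrow> False"
    apply (rule notE[OF nH]) apply (rule exI)+ apply assumption done
  show ?thesis
    unfolding independent_set_def S_def[symmetric]
  proof (intro ballI notI)
    fix w1 w2
    assume w1: "w1 \<in> {w \<in> V - closed_nbhd V E u. card {a \<in> S. E w a} = 1}"
      and w2: "w2 \<in> {w \<in> V - closed_nbhd V E u. card {a \<in> S. E w a} = 1}"
      and e: "E w1 w2"
    from w1 obtain a where a: "{x \<in> S. E w1 x} = {a}" by (auto simp: card_1_singleton_iff)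
    from w2 obtain b where b: "{x \<in> S. E w2 x} = {b}" by (auto simp: card_1_singleton_iff)
    have aS: "a \<in> S" "E w1 a" using a by auto
    have bS: "b \<in> S" "E w2 b" using b by auto
    have w1n: "w1 \<noteq> u" "\<not> E u w1" "w1 \<in> V" using w1 unfolding closed_nbhd_def nbhd_def by auto
    have w2n: "w2 \<noteq> u" "\<not> E u w2" "w2 \<in> V" using w2 unfolding closed_nbhd_def nbhd_def by auto
    have w12: "w1 \<noteq> w2" using e sg(3) by blast
    have nS1: "\<And>x. x \<in> S \<Longrightarrow> x \<noteq> w1" using Su w1n by blast
    have nS2: "\<And>x. x \<in> S \<Longrightarrow> x \<noteq> w2" using Su w2n by blast
    obtain c d where cd: "c \<in> S" "d \<in> S" "c \<noteq> d" "c \<noteq> a" "c \<noteq> b" "d \<noteq> a" "d \<noteq> b"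
      using two_others[OF K(1) aS(1) bS(1)] by blast
    have uS: "u \<noteq> a" "u \<noteq> b" "u \<noteq> c" "u \<noteq> d" using Su aS bS cd sg(3) by metis+
    have ne: "a \<noteq> w1" "a \<noteq> w2" "b \<noteq> w1" "b \<noteq> w2" "c \<noteq> w1" "c \<noteq> w2" "d \<noteq> w1" "d \<noteq> w2"
      using nS1 nS2 aS bS cd by blast+
    have Ed: "E a c" "E c d" "E d a" "E c u" "E u d" "E a w1" "E w2 b"
      using K(2)[of a c] K(2)[of c d] K(2)[of d a] cd aS bS Su[of c] Su[of d] sg(2)[of w1 a] sg(2)[of u c] by auto
    have inV: "a \<in> V" "b \<in> V" "c \<in> V" "d \<in> V" using Su aS bS cd by blast+
    show False
    proof (cases "a = b")
      case True
      have "{a,c,u,d,w1,w2} \<subseteq> V \<and> distinct [a,c,u,d,w1,w2] \<and>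
        E a c \<and> E c u \<and> E u d \<and> E d a \<and> E a w1 \<and> E w1 w2 \<and> E w2 a"
      proof (intro conjI)
        show "{a,c,u,d,w1,w2} \<subseteq> V" using inV w1n w2n \<open>u \<in> V\<close> by blast
        show "distinct [a,c,u,d,w1,w2]" using cd uS ne w1n w2n w12 by simp
      qed (use True bS Ed e in auto)
      then show False by (rule nH')
    next
      case False
      have "{a,w1,w2,b,c,d} \<subseteq> V \<and> distinct [a,w1,w2,b,c,d] \<and>
        E a w1 \<and> E w1 w2 \<and> E w2 b \<and> E b a \<and> E a c \<and> E c d \<and> E d a"
      proof (intro conjI)
        show "{a,w1,w2,b,c,d} \<subseteq> V" using inV w1n w2n by blast
        show "distinct [a,w1,w2,b,c,d]" using False cd ne w12 by simp
        show "E b a" using False K(2)[of b a] aS bS by blast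
      qed (use Ed e in auto)
      then show False by (rule nH')
    qed
  qed
qed

end
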